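(* Let $H, G_1,\dots,G_r$ be finite simple graphs and $q\in\{1,\dots,r\}$ a positive integer. Suppose that $\widehat{H}\otimes\mathcal{C}_q\le\bigoplus_{d=1}^r\widehat{G_d}\otimes\mathcal{C}_d$. Then $\widehat{H}\otimes\mathcal{C}_q\le\bigoplus_{d=q}^r\widehat{G_d}\otimes\mathcal{C}_d$.
   Context: A noncommutative graph is a subspace $S\subseteq B(\mathcal{H})$ of operators on a finite-dimensional complex Hilbert space $\mathcal{H}$ with $I\in S$ and $S^*=S$. For noncommutative graphs $T\subseteq B(\mathcal{K})$ and $S\subseteq B(\mathcal{H})$, a cohomomorphism from $T$ to $S$ is a finite family of linear maps $E_i:\mathcal{K}\to\mathcal{H}$ ($i\in I$) with $\sum_i E_i^*E_i=I$ and $E_i^*SE_j\subseteq T$ for all $i,j\in I$; we write $T\le S$ if one exists. Tensor product: $S\otimes T=\operatorname{span}\{A\otimes B: A\in S, B\in T\}$; direct sum: $S\oplus T=\{A\oplus B:A\in S,B\in T\}$. For a finite simple graph $G$ (write $x\simeq x'$ if $x=x'$ or $x,x'$ adjacent), $\widehat{G}=\operatorname{span}\{|x\rangle\langle x'|: x,x'\in V(G), x\simeq x'\}\subseteq B(\mathbb{C}^{V(G)})$. For $d\ge1$, $\mathcal{C}_d=\mathbb{C}I\subseteq B(\mathbb{C}^d)$ (confusability graph of the noiseless $d$-dimensional quantum channel). If $V(G_d)$ is empty, the corresponding summand is zero-dimensional. *)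

theory Defs
  imports "Jordan_Normal_Form.Matrix"
begin

text \<open>Operators on C^n are complex n x n matrices (Jordan_Normal_Form).
  A noncommutative graph is represented by its ambient dimension n together with a set of
  n x n matrices.\<close>

definition adj :: "complex mat \<Rightarrow> complex mat" where
  "adj A = mat (dim_col A) (dim_row A) (\<lambda>(i,j). cnj (A $$ (j,i)))"

definition kron :: "complex mat \<Rightarrow> complex mat \<Rightarrow> complex mat" where
  "kron A B = mat (dim_row A * dim_row B) (dim_col A * dim_col B)
     (\<lambda>(i,j). A $$ (i div dim_row B, j div dim_col B) * B $$ (i mod dim_row B, j mod dim_col B))"

definition msum :: "nat \<Rightarrow> complex mat list \<Rightarrow> complex mat" where
  "msum k xs = foldr (+) xs (0\<^sub>m k k)"

definition mspan :: "nat \<Rightarrow> complex mat set \<Rightarrow> complex mat set" where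
  "mspan n X = {M. \<exists>cs As. length cs = length As \<and> set As \<subseteq> X \<and>
      M = msum n (map (\<lambda>(c,A). c \<cdot>\<^sub>m A) (zip cs As))}"

definition cohom :: "nat \<Rightarrow> complex mat set \<Rightarrow> nat \<Rightarrow> complex mat set \<Rightarrow> bool" where
  "cohom k T n S \<longleftrightarrow> (\<exists>Es :: complex mat list.
      (\<forall>E \<in> set Es. E \<in> carrier_mat n k) \<and>
      msum k (map (\<lambda>E. adj E * E) Es) = 1\<^sub>m k \<and>
      (\<forall>Ei \<in> set Es. \<forall>Ej \<in> set Es. \<forall>A \<in> S. adj Ei * A * Ej \<in> T))"

definition nc_tensor :: "nat \<Rightarrow> complex mat set \<Rightarrow> nat \<Rightarrow> complex mat set \<Rightarrow> complex mat set" where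
  "nc_tensor n S m T = mspan (n * m) {kron A B | A B. A \<in> S \<and> B \<in> T}"

fun nc_dsum :: "(nat \<times> complex mat set) list \<Rightarrow> nat \<times> complex mat set" where
  "nc_dsum [] = (0, {0\<^sub>m 0 0})"
| "nc_dsum ((n, S) # rest) =
     (n + fst (nc_dsum rest),
      {four_block_mat A (0\<^sub>m n (fst (nc_dsum rest))) (0\<^sub>m (fst (nc_dsum rest)) n) B
        | A B. A \<in> S \<and> B \<in> snd (nc_dsum rest)})"

definition simple_graph :: "nat \<Rightarrow> (nat \<Rightarrow> nat \<Rightarrow> bool) \<Rightarrow> bool" where
  "simple_graph n E \<longleftrightarrow> (\<forall>x<n. \<forall>y<n. E x y \<longrightarrow> E y x) \<and> (\<forall>x<n. \<not> E x x)"

definition munit :: "nat \<Rightarrow> nat \<Rightarrow> nat \<Rightarrow> complex mat" where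
  "munit n x y = mat n n (\<lambda>(i,j). if i = x \<and> j = y then 1 else 0)"

definition ghat :: "nat \<Rightarrow> (nat \<Rightarrow> nat \<Rightarrow> bool) \<Rightarrow> complex mat set" where
  "ghat n E = mspan n {munit n x y | x y. x < n \<and> y < n \<and> (x = y \<or> E x y)}"

definition Cd :: "nat \<Rightarrow> complex mat set" where
  "Cd d = {c \<cdot>\<^sub>m 1\<^sub>m d | c. True}"

definition summand :: "(nat \<Rightarrow> nat) \<Rightarrow> (nat \<Rightarrow> nat \<Rightarrow> nat \<Rightarrow> bool) \<Rightarrow> nat \<Rightarrow> nat \<times> complex mat set" where
  "summand Gn GE d = (Gn d * d, nc_tensor (Gn d) (ghat (Gn d) (GE d)) d (Cd d))"

end

theory Submission
  imports Defs "Jordan_Normal_Form.Determinant"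
begin

lemma msum_Cons: "msum n (x # xs) = x + msum n xs" by (simp add: msum_def)
lemma msum_Nil: "msum n [] = 0\<^sub>m n n" by (simp add: msum_def)

lemma mspan_induct:
  assumes X: "\<And>A. A \<in> X \<Longrightarrow> A \<in> carrier_mat n n \<and> P A"
    and P0: "P (0\<^sub>m n n)"
    and Padd: "\<And>A B. A \<in> carrier_mat n n \<Longrightarrow> B \<in> carrier_mat n n \<Longrightarrow> P A \<Longrightarrow> P B \<Longrightarrow> P (A + B)"
    and Psm: "\<And>c A. A \<in> carrier_mat n n \<Longrightarrow> P A \<Longrightarrow> P (c \<cdot>\<^sub>m A)"
    and M: "M \<in> mspan n X"
  shows "M \<in> carrier_mat n n \<and> P M"
proof -
  obtain cs As where l: "length cs = length As" and s: "set As \<subseteq> X"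
    and Me: "M = msum n (map (\<lambda>(c,A). c \<cdot>\<^sub>m A) (zip cs As))"
    using M unfolding mspan_def by blast
  have "set As \<subseteq> X \<Longrightarrow> msum n (map (\<lambda>(c,A). c \<cdot>\<^sub>m A) (zip cs As)) \<in> carrier_mat n n
     \<and> P (msum n (map (\<lambda>(c,A). c \<cdot>\<^sub>m A) (zip cs As)))"
    using l
  proof (induction cs As rule: list_induct2)
    case Nil thus ?case using P0 by (simp add: msum_Nil)
  next
    case (Cons c cs A As)
    then have A: "A \<in> carrier_mat n n" "P A" using X by auto
    from Cons show ?case using A Padd Psm by (simp add: msum_Cons)
  qed
  thus ?thesis using s Me by simp
qed

lemma zero_mspan: "0\<^sub>m n n \<in> mspan n X"
  unfolding mspan_def by (rule CollectI, rule exI[of _ "[]"], rule exI[of _ "[]"], simp add: msum_Nil)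

lemma gen_mspan: "A \<in> X \<Longrightarrow> A \<in> carrier_mat n n \<Longrightarrow> A \<in> mspan n X"
proof -
  assume a: "A \<in> X" "A \<in> carrier_mat n n"
  have "A = msum n (map (\<lambda>(c,A). c \<cdot>\<^sub>m A) (zip [1] [A]))"
    using a by (simp add: msum_Cons msum_Nil, intro eq_matI, auto)
  thus ?thesis unfolding mspan_def using a(1)
    by (intro CollectI exI[of _ "[1]"] exI[of _ "[A]"]) simp
qed

lemma munit_carrier: "munit n x y \<in> carrier_mat n n" by (simp add: munit_def)

lemma ghat_carrier: "ghat n E \<subseteq> carrier_mat n n"
proof
  fix M assume M: "M \<in> ghat n E"
  show "M \<in> carrier_mat n n"
  proof (rule mspan_induct[where P="\<lambda>_. True", THEN conjunct1])
    show "M \<in> mspan n {munit n x y | x y. x < n \<and> y < n \<and> (x = y \<or> E x y)}"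
      using M by (simp add: ghat_def)
  next
    fix A assume "A \<in> {munit n x y | x y. x < n \<and> y < n \<and> (x = y \<or> E x y)}"
    then obtain x y where "A = munit n x y" by blast
    thus "A \<in> carrier_mat n n \<and> True" by (simp add: munit_carrier)
  qed simp_all
qed

lemma kron_carrier: "A \<in> carrier_mat n n \<Longrightarrow> B \<in> carrier_mat m m \<Longrightarrow> kron A B \<in> carrier_mat (n*m) (n*m)"
  by (simp add: kron_def)

lemma Cd_carrier: "Cd d \<subseteq> carrier_mat d d" by (auto simp: Cd_def)

lemma tensor_carrier: assumes S: "S \<subseteq> carrier_mat n n" and T: "T \<subseteq> carrier_mat m m"
  shows "nc_tensor n S m T \<subseteq> carrier_mat (n*m) (n*m)"
proof
  fix M assume M: "M \<in> nc_tensor n S m T"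
  show "M \<in> carrier_mat (n*m) (n*m)"
  proof (rule mspan_induct[where P="\<lambda>_. True", THEN conjunct1])
    show "M \<in> mspan (n*m) {kron A B | A B. A \<in> S \<and> B \<in> T}"
      using M by (simp add: nc_tensor_def)
  next
    fix K assume "K \<in> {kron A B | A B. A \<in> S \<and> B \<in> T}"
    then obtain A B where "K = kron A B" "A \<in> S" "B \<in> T" by blast
    moreover have "A \<in> carrier_mat n n" "B \<in> carrier_mat m m" using calculation S T by blast+
    ultimately show "K \<in> carrier_mat (n*m) (n*m) \<and> True" by (simp add: kron_carrier)
  qed simp_all
qed

lemma summand_carrier: "snd (summand Gn GE d) \<subseteq> carrier_mat (fst (summand Gn GE d)) (fst (summand Gn GE d))"
  unfolding summand_def using tensor_carrier[OF ghat_carrier Cd_carrier] by simp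

lemma summand_zero: "0\<^sub>m (fst (summand Gn GE d)) (fst (summand Gn GE d)) \<in> snd (summand Gn GE d)"
  unfolding summand_def nc_tensor_def by (simp add: zero_mspan)

definition shiftm :: "nat \<Rightarrow> complex mat \<Rightarrow> complex mat" where
  "shiftm k B = mat (k + dim_row B) (k + dim_col B) (\<lambda>(i,j). if k \<le> i \<and> k \<le> j then B $$ (i-k, j-k) else 0)"

lemma shiftm_0: "shiftm 0 B = B"
  by (rule eq_matI) (simp_all add: shiftm_def)

lemma shiftm_step: assumes B: "B \<in> carrier_mat n2 n2"
  shows "shiftm (n + m) B = four_block_mat (0\<^sub>m n n) (0\<^sub>m n (m+n2)) (0\<^sub>m (m+n2) n) (shiftm m B)"
proof (rule eq_matI)
  fix i j assume "i < dim_row (four_block_mat (0\<^sub>m n n) (0\<^sub>m n (m+n2)) (0\<^sub>m (m+n2) n) (shiftm m B))"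
    "j < dim_col (four_block_mat (0\<^sub>m n n) (0\<^sub>m n (m+n2)) (0\<^sub>m (m+n2) n) (shiftm m B))"
  hence ij: "i < n + (m + n2)" "j < n + (m + n2)" using B by (simp_all add: shiftm_def)
  show "shiftm (n + m) B $$ (i,j) = four_block_mat (0\<^sub>m n n) (0\<^sub>m n (m+n2)) (0\<^sub>m (m+n2) n) (shiftm m B) $$ (i,j)"
  proof (cases "i < n")
    case True thus ?thesis using ij B by (simp add: shiftm_def)
  next
    case False
    show ?thesis
    proof (cases "j < n")
      case True thus ?thesis using ij False B by (simp add: shiftm_def)
    next
      case F2: False
      have "i - n < m + n2" "j - n < m + n2" using ij False F2 by linarith+
      moreover have "(n + m \<le> i \<and> n + m \<le> j) = (m \<le> i - n \<and> m \<le> j - n)"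
        using False F2 by linarith
      moreover have "i - (n+m) = i - n - m" "j - (n+m) = j - n - m" by simp_all
      ultimately show ?thesis using ij False F2 B by (simp add: shiftm_def)
    qed
  qed
qed (use B in \<open>simp_all add: shiftm_def\<close>)

definition indm :: "nat \<Rightarrow> nat \<Rightarrow> nat \<Rightarrow> complex mat" where
  "indm N a len = mat N N (\<lambda>(i,j). if i = j \<and> a \<le> i \<and> i < a+len then 1 else 0)"

lemma indm_shift: "indm (n+N) (a+n) len = four_block_mat (0\<^sub>m n n) (0\<^sub>m n N) (0\<^sub>m N n) (indm N a len)"
proof (rule eq_matI)
  fix i j assume "i < dim_row (four_block_mat (0\<^sub>m n n) (0\<^sub>m n N) (0\<^sub>m N n) (indm N a len))"
    "j < dim_col (four_block_mat (0\<^sub>m n n) (0\<^sub>m n N) (0\<^sub>m N n) (indm N a len))"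
  hence ij: "i < n + N" "j < n + N" by (simp_all add: indm_def)
  show "indm (n+N) (a+n) len $$ (i,j) = four_block_mat (0\<^sub>m n n) (0\<^sub>m n N) (0\<^sub>m N n) (indm N a len) $$ (i,j)"
  proof (cases "i < n")
    case True thus ?thesis using ij by (simp add: indm_def)
  next
    case False
    show ?thesis
    proof (cases "j < n")
      case True thus ?thesis using ij False by (simp add: indm_def)
    next
      case F2: False
      have "i - n < N" "j - n < N" using ij False F2 by linarith+
      moreover have "(i = j \<and> a + n \<le> i \<and> i < a + n + len) = (i - n = j - n \<and> a \<le> i - n \<and> i - n < a + len)"
        using False F2 by linarith
      ultimately show ?thesis using ij False F2 by (simp add: indm_def)
    qed
  qed
qed (simp_all add: indm_def)

lemma indm_top: "a + len \<le> n \<Longrightarrow> indm (n+N) a len = four_block_mat (indm n a len) (0\<^sub>m n N) (0\<^sub>m N n) (0\<^sub>m N N)"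
proof (rule eq_matI)
  assume al: "a + len \<le> n"
  fix i j assume "i < dim_row (four_block_mat (indm n a len) (0\<^sub>m n N) (0\<^sub>m N n) (0\<^sub>m N N))"
    "j < dim_col (four_block_mat (indm n a len) (0\<^sub>m n N) (0\<^sub>m N n) (0\<^sub>m N N))"
  hence ij: "i < n + N" "j < n + N" by (simp_all add: indm_def)
  show "indm (n+N) a len $$ (i,j) = four_block_mat (indm n a len) (0\<^sub>m n N) (0\<^sub>m N n) (0\<^sub>m N N) $$ (i,j)"
  proof (cases "i < n")
    case True
    show ?thesis
    proof (cases "j < n")
      case True thus ?thesis using ij \<open>i < n\<close> by (simp add: indm_def)
    next
      case False thus ?thesis using ij \<open>i < n\<close> by (simp add: indm_def)
    qed
  next
    case False
    have "i - n < N" using ij False by linarith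
    moreover have "\<not> (a \<le> i \<and> i < a + len)" using False al by linarith
    ultimately show ?thesis using ij False by (simp add: indm_def)
  qed
qed (simp_all add: indm_def)

lemma dsum_fst_append: "fst (nc_dsum (L1@L2)) = fst (nc_dsum L1) + fst (nc_dsum L2)"
proof (induction L1)
  case (Cons p L) thus ?case by (cases p) simp
qed simp

lemma dsum_carrier: "(\<forall>p\<in>set L. snd p \<subseteq> carrier_mat (fst p) (fst p)) \<Longrightarrow>
   snd (nc_dsum L) \<subseteq> carrier_mat (fst (nc_dsum L)) (fst (nc_dsum L))"
proof (induction L)
  case (Cons p L) thus ?case by (cases p) (auto intro!: four_block_carrier_mat)
qed simp

lemma dsum_zero: "(\<forall>p\<in>set L. 0\<^sub>m (fst p) (fst p) \<in> snd p) \<Longrightarrow>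
   0\<^sub>m (fst (nc_dsum L)) (fst (nc_dsum L)) \<in> snd (nc_dsum L)"
proof (induction L)
  case (Cons p L)
  obtain n S where p: "p = (n,S)" by (cases p)
  have "0\<^sub>m (fst (nc_dsum (p#L))) (fst (nc_dsum (p#L))) = four_block_mat (0\<^sub>m n n) (0\<^sub>m n (fst (nc_dsum L)))
     (0\<^sub>m (fst (nc_dsum L)) n) (0\<^sub>m (fst (nc_dsum L)) (fst (nc_dsum L)))"
    by (simp add: p)
  show ?case unfolding p apply simp
    apply (rule exI[of _ "0\<^sub>m n n"], rule exI[of _ "0\<^sub>m (fst (nc_dsum L)) (fst (nc_dsum L))"])
    using Cons p by simp
qed simp

lemma dsum_cons_mem: "A \<in> S \<Longrightarrow> B \<in> snd (nc_dsum rest) \<Longrightarrow>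
  four_block_mat A (0\<^sub>m n (fst (nc_dsum rest))) (0\<^sub>m (fst (nc_dsum rest)) n) B \<in> snd (nc_dsum ((n,S)#rest))"
  by (simp only: nc_dsum.simps snd_conv mem_Collect_eq) blast

lemma dsum_shift:
  assumes "\<forall>p\<in>set L1. 0\<^sub>m (fst p) (fst p) \<in> snd p"
    and "B \<in> snd (nc_dsum L2)" and "B \<in> carrier_mat (fst (nc_dsum L2)) (fst (nc_dsum L2))"
  shows "shiftm (fst (nc_dsum L1)) B \<in> snd (nc_dsum (L1 @ L2))"
  using assms(1)
proof (induction L1)
  case Nil
  have "shiftm 0 B = B" by (rule shiftm_0)
  thus ?case using assms(2) by simp
next
  case (Cons p L)
  obtain n S where p: "p = (n,S)" by (cases p)
  let ?N = "fst (nc_dsum (L @ L2))"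
  have N: "?N = fst (nc_dsum L) + fst (nc_dsum L2)" by (rule dsum_fst_append)
  have e: "shiftm (fst (nc_dsum (p#L))) B = four_block_mat (0\<^sub>m n n) (0\<^sub>m n ?N) (0\<^sub>m ?N n) (shiftm (fst (nc_dsum L)) B)"
    unfolding N using shiftm_step[OF assms(3), of n "fst (nc_dsum L)"] by (simp add: p)
  have IH: "shiftm (fst (nc_dsum L)) B \<in> snd (nc_dsum (L @ L2))" using Cons p by simp
  have z: "0\<^sub>m n n \<in> S" using Cons p by simp
  show ?case unfolding e unfolding p append_Cons
    using z IH by (rule dsum_cons_mem)
qed

lemma idx_lt: "(x::nat) < hn \<Longrightarrow> a < q \<Longrightarrow> x*q + a < hn*q"
proof -
  assume "x < hn" "a < q"
  hence "x*q + a < x*q + q" by simp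
  also have "\<dots> = Suc x * q" by simp
  also have "\<dots> \<le> hn * q" using \<open>x < hn\<close> by (intro mult_le_mono1) simp
  finally show ?thesis .
qed





lemma dsum_ind:
  "k < fst (nc_dsum L1) \<Longrightarrow> \<forall>p\<in>set (L1@L2). 0\<^sub>m (fst p) (fst p) \<in> snd p \<Longrightarrow>
   \<forall>p\<in>set L1. \<forall>k<fst p. \<exists>a len. a \<le> k \<and> k < a+len \<and> a+len \<le> fst p \<and> len < q \<and> indm (fst p) a len \<in> snd p
  \<Longrightarrow> \<exists>a len. a \<le> k \<and> k < a+len \<and> a+len \<le> fst (nc_dsum (L1@L2)) \<and> len < q \<and>
       indm (fst (nc_dsum (L1@L2))) a len \<in> snd (nc_dsum (L1@L2))"
proof (induction L1 arbitrary: k)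
  case (Cons p L)
  obtain n S where p: "p = (n,S)" by (cases p)
  let ?N = "fst (nc_dsum (L@L2))"
  have z': "\<forall>p\<in>set (L@L2). 0\<^sub>m (fst p) (fst p) \<in> snd p"
    by (rule ballI, rule bspec[OF Cons.prems(2)]) simp
  have h': "\<forall>p\<in>set L. \<forall>k<fst p. \<exists>a len. a \<le> k \<and> k < a+len \<and> a+len \<le> fst p \<and> len < q \<and> indm (fst p) a len \<in> snd p"
    by (rule ballI, rule bspec[OF Cons.prems(3)]) simp
  have zL: "0\<^sub>m ?N ?N \<in> snd (nc_dsum (L@L2))" by (rule dsum_zero[OF z'])
  have zS: "0\<^sub>m n n \<in> S" using bspec[OF Cons.prems(2), of p] p by simp
  have fstE: "fst (nc_dsum ((p#L)@L2)) = n + ?N" by (simp add: p)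
  have mem: "\<And>A B. A \<in> S \<Longrightarrow> B \<in> snd (nc_dsum (L@L2)) \<Longrightarrow>
     four_block_mat A (0\<^sub>m n ?N) (0\<^sub>m ?N n) B \<in> snd (nc_dsum ((p#L)@L2))"
    unfolding p append_Cons by (rule dsum_cons_mem)
  show ?case
  proof (cases "k < n")
    case True
    have h3: "\<forall>k<n. \<exists>a len. a \<le> k \<and> k < a+len \<and> a+len \<le> n \<and> len < q \<and> indm n a len \<in> S"
    proof -
      have "p \<in> set (p#L)" by simp
      from bspec[OF Cons.prems(3) this] show ?thesis unfolding p by simp
    qed
    have ex: "\<exists>a len. a \<le> k \<and> k < a+len \<and> a+len \<le> n \<and> len < q \<and> indm n a len \<in> S"
      using h3 True by simp
    then obtain a len where a: "a \<le> k" "k < a+len" "a+len \<le> n" "len<q" "indm n a len \<in> S"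
      by blast
    have e: "indm (n + ?N) a len = four_block_mat (indm n a len) (0\<^sub>m n ?N) (0\<^sub>m ?N n) (0\<^sub>m ?N ?N)"
      using a(3) by (rule indm_top)
    have m: "indm (n + ?N) a len \<in> snd (nc_dsum ((p#L)@L2))"
      unfolding e by (rule mem[OF a(5) zL])
    have ar: "a+len \<le> n + ?N" using a(3) by (rule trans_le_add1)
    have goal: "a \<le> k \<and> k < a+len \<and> a+len \<le> n + ?N \<and> len < q \<and> indm (n + ?N) a len \<in> snd (nc_dsum ((p#L)@L2))"
      using a(1,2,4) ar m by (intro conjI)
    show ?thesis unfolding fstE by (rule exI[of _ a], rule exI[of _ len], rule goal)
  next
    case False
    have k: "k - n < fst (nc_dsum L)" using Cons.prems(1) False p by simp
    have "\<exists>a len. a \<le> k-n \<and> k-n < a+len \<and> a+len \<le> ?N \<and> len < q \<and> indm ?N a len \<in> snd (nc_dsum (L@L2))"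
      by (rule Cons.IH[OF k z' h'])
    then obtain a len where a: "a \<le> k-n" "k-n < a+len" "a+len \<le> ?N" "len<q" "indm ?N a len \<in> snd (nc_dsum (L@L2))"
      by blast
    have e: "indm (n + ?N) (a+n) len = four_block_mat (0\<^sub>m n n) (0\<^sub>m n ?N) (0\<^sub>m ?N n) (indm ?N a len)"
      by (rule indm_shift)
    have kk: "k = (k-n)+n" using False by simp
    have ar: "a + n \<le> k" "k < a+n+len" "a+n+len \<le> n + ?N" using a(1,2,3) kk by linarith+
    have m: "indm (n + ?N) (a+n) len \<in> snd (nc_dsum ((p#L)@L2))"
      unfolding e by (rule mem[OF zS a(5)])
    have goal: "a+n \<le> k \<and> k < a+n+len \<and> a+n+len \<le> n + ?N \<and> len < q \<and> indm (n + ?N) (a+n) len \<in> snd (nc_dsum ((p#L)@L2))"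
      using ar a(4) m by (intro conjI)
    show ?thesis unfolding fstE by (rule exI[of _ "a+n"], rule exI[of _ len], rule goal)
  qed
qed simp



lemma div_eq_iff: "0 < (d::nat) \<Longrightarrow> (i div d = v) = (v*d \<le> i \<and> i < v*d + d)"
proof
  assume d: "0 < d" and h: "i div d = v"
  have e: "i = v*d + i mod d" using h div_mult_mod_eq[of i d] by simp
  have "i mod d < d" using d by simp
  thus "v*d \<le> i \<and> i < v*d + d" using e by linarith
next
  assume d: "0 < d" and h: "v*d \<le> i \<and> i < v*d + d"
  show "i div d = v"
    by (rule div_nat_eqI) (use h in \<open>simp_all add: mult.commute\<close>)
qed

lemma kron_unit_ind: assumes v: "v < m" and d: "0 < d"
  shows "kron (munit m v v) (1 \<cdot>\<^sub>m 1\<^sub>m d) = indm (m*d) (v*d) d"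
proof (rule eq_matI)
  fix i j assume i: "i < dim_row (indm (m*d) (v*d) d)" and j: "j < dim_col (indm (m*d) (v*d) d)"
  have i': "i < m*d" "j < m*d" using i j by (simp_all add: indm_def)
  have id: "i div d < m" "j div d < m" using i' by (simp_all add: less_mult_imp_div_less)
  have md: "i mod d < d" "j mod d < d" using d by simp_all
  have eq1: "(i div d = v \<and> j div d = v \<and> i mod d = j mod d) = (i = j \<and> v*d \<le> i \<and> i < v*d + d)"
  proof
    assume h: "i div d = v \<and> j div d = v \<and> i mod d = j mod d"
    have "i = (i div d)*d + i mod d" by simp
    also have "\<dots> = (j div d)*d + j mod d" using h by simp
    also have "\<dots> = j" by simp
    finally have "i = j" .
    thus "i = j \<and> v*d \<le> i \<and> i < v*d + d" using h div_eq_iff[OF d, of i v] by simp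
  next
    assume h: "i = j \<and> v*d \<le> i \<and> i < v*d + d"
    thus "i div d = v \<and> j div d = v \<and> i mod d = j mod d" using div_eq_iff[OF d, of i v] by simp
  qed
  have L: "kron (munit m v v) (1 \<cdot>\<^sub>m 1\<^sub>m d) $$ (i, j) = (if i div d = v \<and> j div d = v \<and> i mod d = j mod d then 1 else 0)"
    using i' id md by (simp add: kron_def munit_def)
  have R: "indm (m*d) (v*d) d $$ (i, j) = (if i = j \<and> v*d \<le> i \<and> i < v*d + d then 1 else 0)"
    using i' by (simp add: indm_def)
  show "kron (munit m v v) (1 \<cdot>\<^sub>m 1\<^sub>m d) $$ (i, j) = indm (m*d) (v*d) d $$ (i, j)"
    unfolding L R eq1 ..
qed (simp_all add: kron_def munit_def indm_def)

lemma summand_ind: assumes d0: "0 < d" and dq: "d < q"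
  shows "\<forall>k<fst (summand Gn GE d). \<exists>a len. a \<le> k \<and> k < a+len \<and> a+len \<le> fst (summand Gn GE d) \<and> len < q \<and>
     indm (fst (summand Gn GE d)) a len \<in> snd (summand Gn GE d)"
proof (intro allI impI)
  fix k assume k: "k < fst (summand Gn GE d)"
  hence k': "k < Gn d * d" by (simp add: summand_def)
  define v where "v = k div d"
  have v: "v < Gn d" using k' by (simp add: v_def less_mult_imp_div_less)
  have mu0: "munit (Gn d) v v \<in> {munit (Gn d) x y | x y. x < Gn d \<and> y < Gn d \<and> (x = y \<or> GE d x y)}"
    by (rule CollectI, rule exI[of _ v], rule exI[of _ v]) (simp add: v)
  have mu: "munit (Gn d) v v \<in> ghat (Gn d) (GE d)"
    unfolding ghat_def by (rule gen_mspan[OF mu0 munit_carrier])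
  have c1: "1 \<cdot>\<^sub>m 1\<^sub>m d \<in> Cd d" by (auto simp: Cd_def)
  have g0: "kron (munit (Gn d) v v) (1 \<cdot>\<^sub>m 1\<^sub>m d) \<in> {kron A B | A B. A \<in> ghat (Gn d) (GE d) \<and> B \<in> Cd d}"
    by (rule CollectI, rule exI[of _ "munit (Gn d) v v"], rule exI[of _ "1 \<cdot>\<^sub>m 1\<^sub>m d"]) (simp add: mu c1)
  have kc: "kron (munit (Gn d) v v) (1 \<cdot>\<^sub>m 1\<^sub>m d) \<in> carrier_mat (Gn d * d) (Gn d * d)"
    by (rule kron_carrier[OF munit_carrier]) simp
  have "kron (munit (Gn d) v v) (1 \<cdot>\<^sub>m 1\<^sub>m d) \<in> nc_tensor (Gn d) (ghat (Gn d) (GE d)) d (Cd d)"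
    unfolding nc_tensor_def by (rule gen_mspan[OF g0 kc])
  hence inS: "indm (Gn d * d) (v*d) d \<in> snd (summand Gn GE d)"
    unfolding kron_unit_ind[OF v d0] by (simp add: summand_def)
  have r1: "v*d \<le> k \<and> k < v*d + d" using div_eq_iff[OF d0, of k v] by (simp add: v_def)
  have "Suc v * d \<le> Gn d * d" using v by (intro mult_le_mono1) simp
  hence r2: "v*d + d \<le> Gn d * d" by simp
  have fe: "fst (summand Gn GE d) = Gn d * d" by (simp add: summand_def)
  show "\<exists>a len. a \<le> k \<and> k < a+len \<and> a+len \<le> fst (summand Gn GE d) \<and> len < q \<and>
     indm (fst (summand Gn GE d)) a len \<in> snd (summand Gn GE d)"
    unfolding fe
    by (rule exI[of _ "v*d"], rule exI[of _ d]) (use r1 r2 dq inS in simp)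
qed

lemma T_prop:
  assumes X: "X \<in> nc_tensor hn (ghat hn HE) q (Cd q)"
  shows "\<forall>x<hn. \<forall>a<q. \<forall>b<q. X $$ (x*q+a, x*q+b) = (if a = b then X $$ (x*q, x*q) else 0)"
proof -
  define P where "P = (\<lambda>X::complex mat. \<forall>x<hn. \<forall>a<q. \<forall>b<q. X $$ (x*q+a, x*q+b) = (if a = b then X $$ (x*q, x*q) else 0))"
  have idx: "x*q+a < hn*q" "x*q+b < hn*q" "x*q < hn*q" if "x < hn" "a < q" "b < q" for x a b
    using idx_lt[OF that(1) that(2)] idx_lt[OF that(1) that(3)] idx_lt[of x hn 0 q] that by simp_all
  have "X \<in> carrier_mat (hn*q) (hn*q) \<and> P X"
  proof (rule mspan_induct)
    show "X \<in> mspan (hn*q) {kron A B |A B. A \<in> ghat hn HE \<and> B \<in> Cd q}" using X by (simp add: nc_tensor_def)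
  next
    fix K assume "K \<in> {kron A B |A B. A \<in> ghat hn HE \<and> B \<in> Cd q}"
    then obtain A B where K: "K = kron A B" "A \<in> ghat hn HE" "B \<in> Cd q" by blast
    from K(3) obtain c where B: "B = c \<cdot>\<^sub>m 1\<^sub>m q" unfolding Cd_def by blast
    have A: "A \<in> carrier_mat hn hn" using K(2) ghat_carrier by blast
    have dims: "dim_row A = hn" "dim_col A = hn" "dim_row B = q" "dim_col B = q" using A B by auto
    have "P K" unfolding P_def
    proof (intro allI impI)
      fix x a b assume h: "x < hn" "a < q" "b < q"
      note ix = idx[OF h]
      have dm: "(x*q+a) div q = x" "(x*q+a) mod q = a" "(x*q+b) div q = x" "(x*q+b) mod q = b"
        "(x*q) div q = x" "(x*q) mod q = 0"
        using h by simp_all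
      have e1: "K $$ (x*q+a, x*q+b) = A $$ (x,x) * B $$ (a, b)"
        unfolding K(1) kron_def dims using ix dm by simp
      have e2: "K $$ (x*q, x*q) = A $$ (x,x) * B $$ (0, 0)"
        unfolding K(1) kron_def dims using ix dm by simp
      have q0: "0 < q" using h by simp
      show "K $$ (x*q+a, x*q+b) = (if a = b then K $$ (x*q, x*q) else 0)"
        unfolding e1 e2 B using h q0 by simp
    qed
    thus "K \<in> carrier_mat (hn*q) (hn*q) \<and> P K" using K(1) A B by (simp add: kron_carrier)
  next
    show "P (0\<^sub>m (hn*q) (hn*q))" unfolding P_def
    proof (intro allI impI)
      fix x a b assume h: "x < hn" "a < q" "b < q"
      note ix = idx[OF h]
      show "0\<^sub>m (hn*q) (hn*q) $$ (x*q+a, x*q+b) = (if a = b then 0\<^sub>m (hn*q) (hn*q) $$ (x*q, x*q) else 0)"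
        using ix by simp
    qed
  next
    fix A B :: "complex mat" assume c: "A \<in> carrier_mat (hn*q) (hn*q)" "B \<in> carrier_mat (hn*q) (hn*q)" "P A" "P B"
    show "P (A + B)" unfolding P_def
    proof (intro allI impI)
      fix x a b assume h: "x < hn" "a < q" "b < q"
      note ix = idx[OF h]
      have pa: "A $$ (x*q+a, x*q+b) = (if a = b then A $$ (x*q, x*q) else 0)" using c(3) h unfolding P_def by blast
      have pb: "B $$ (x*q+a, x*q+b) = (if a = b then B $$ (x*q, x*q) else 0)" using c(4) h unfolding P_def by blast
      show "(A+B) $$ (x*q+a, x*q+b) = (if a = b then (A+B) $$ (x*q, x*q) else 0)"
        using c(1,2) ix pa pb by simp
    qed
  next
    fix e and A :: "complex mat" assume c: "A \<in> carrier_mat (hn*q) (hn*q)" "P A"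
    show "P (e \<cdot>\<^sub>m A)" unfolding P_def
    proof (intro allI impI)
      fix x a b assume h: "x < hn" "a < q" "b < q"
      note ix = idx[OF h]
      have pa: "A $$ (x*q+a, x*q+b) = (if a = b then A $$ (x*q, x*q) else 0)" using c(2) h unfolding P_def by blast
      show "(e \<cdot>\<^sub>m A) $$ (x*q+a, x*q+b) = (if a = b then (e \<cdot>\<^sub>m A) $$ (x*q, x*q) else 0)"
        using c(1) ix pa by simp
    qed
  qed
  thus ?thesis unfolding P_def by blast
qed



lemma sum_window: "a + len \<le> (N::nat) \<Longrightarrow>
  (\<Sum>s\<in>{0..<N}. if a \<le> s \<and> s < a+len then h s else (0::complex)) = (\<Sum>t\<in>{0..<len}. h (a+t))"
proof -
  assume aN: "a + len \<le> N"
  have "(\<Sum>s\<in>{0..<N}. if a \<le> s \<and> s < a+len then h s else 0) = (\<Sum>s\<in>{s\<in>{0..<N}. a \<le> s \<and> s < a+len}. h s)"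
    by (rule sum.inter_filter[symmetric]) simp
  also have "{s\<in>{0..<N}. a \<le> s \<and> s < a+len} = (\<lambda>t. a+t) ` {0..<len}"
  proof
    show "{s\<in>{0..<N}. a \<le> s \<and> s < a+len} \<subseteq> (\<lambda>t. a+t) ` {0..<len}"
    proof
      fix s assume "s \<in> {s\<in>{0..<N}. a \<le> s \<and> s < a+len}"
      hence "s = a + (s - a)" "s - a \<in> {0..<len}" by auto
      thus "s \<in> (\<lambda>t. a+t) ` {0..<len}" by (rule image_eqI)
    qed
  qed (use aN in auto)
  also have "(\<Sum>s\<in>(\<lambda>t. a+t) ` {0..<len}. h s) = (\<Sum>t\<in>{0..<len}. h (a+t))"
    by (rule sum.reindex_cong[where l="\<lambda>t. a+t"]) (auto simp: inj_on_def)
  finally show ?thesis .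
qed

lemma sum_prefix: "len \<le> (q::nat) \<Longrightarrow>
  (\<Sum>t\<in>{0..<q}. if t < len then h t else (0::complex)) = (\<Sum>t\<in>{0..<len}. h t)"
proof -
  assume lq: "len \<le> q"
  have "(\<Sum>t\<in>{0..<q}. if t < len then h t else (0::complex)) = sum h {t\<in>{0..<q}. t < len}"
    by (rule sum.inter_filter[symmetric]) simp
  also have "{t\<in>{0..<q}. t < len} = {0..<len}" using lq by auto
  finally show ?thesis .
qed

lemma adj_carrier: "E \<in> carrier_mat n k \<Longrightarrow> adj E \<in> carrier_mat k n"
  by (simp add: adj_def)

lemma adj_index: "i < dim_col E \<Longrightarrow> j < dim_row E \<Longrightarrow> adj E $$ (i,j) = cnj (E $$ (j,i))"
  by (simp add: adj_def)

lemma indm_mult: assumes E: "E \<in> carrier_mat N K" and s: "s < N" and j: "j < K"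
  shows "(indm N a len * E) $$ (s,j) = (if a \<le> s \<and> s < a+len then E $$ (s,j) else 0)"
proof -
  have "(indm N a len * E) $$ (s,j) = (\<Sum>l\<in>{0..<N}. indm N a len $$ (s,l) * E $$ (l,j))"
    using E s j by (simp add: scalar_prod_def indm_def)
  also have "\<dots> = (\<Sum>l\<in>{0..<N}. if l = s then (if a \<le> s \<and> s < a+len then E $$ (s,j) else 0) else 0)"
    by (rule sum.cong) (use s in \<open>auto simp: indm_def\<close>)
  also have "\<dots> = (if a \<le> s \<and> s < a+len then E $$ (s,j) else 0)" using s by simp
  finally show ?thesis .
qed

lemma X_entry: assumes E: "E \<in> carrier_mat N K" and aN: "a + len \<le> N" and i: "i < K" and j: "j < K"
  shows "(adj E * indm N a len * E) $$ (i,j) = (\<Sum>t\<in>{0..<len}. cnj (E $$ (a+t,i)) * E $$ (a+t,j))"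
proof -
  have I: "indm N a len \<in> carrier_mat N N" by (simp add: indm_def)
  have A: "adj E \<in> carrier_mat K N" by (rule adj_carrier[OF E])
  have "adj E * indm N a len * E = adj E * (indm N a len * E)"
    by (rule assoc_mult_mat[OF A I E])
  hence "(adj E * indm N a len * E) $$ (i,j) = (\<Sum>s\<in>{0..<N}. adj E $$ (i,s) * (indm N a len * E) $$ (s,j))"
    using A I E i j by (simp add: scalar_prod_def)
  also have "\<dots> = (\<Sum>s\<in>{0..<N}. if a \<le> s \<and> s < a+len then cnj (E $$ (s,i)) * E $$ (s,j) else 0)"
    by (rule sum.cong) (use E i j in \<open>auto simp: indm_mult adj_index\<close>)
  also have "\<dots> = (\<Sum>t\<in>{0..<len}. cnj (E $$ (a+t,i)) * E $$ (a+t,j))"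
    by (rule sum_window[OF aN])
  finally show ?thesis .
qed


lemma rows_zero:
  assumes E: "E \<in> carrier_mat N (hn*q)" and aN: "a+len \<le> N" and lq: "len < q"
   and T: "adj E * indm N a len * E \<in> nc_tensor hn (ghat hn HE) q (Cd q)"
   and k: "a \<le> k" "k < a+len" and c: "c < hn*q"
  shows "E $$ (k,c) = 0"
proof -
  define X where "X = adj E * indm N a len * E"
  have q0: "0 < q" using lq by simp
  define x where "x = c div q"
  define al where "al = c mod q"
  have x: "x < hn" using c by (simp add: x_def less_mult_imp_div_less)
  have al: "al < q" using q0 by (simp add: al_def)
  have cx: "c = x*q + al" by (simp add: x_def al_def)
  have TP: "\<forall>x<hn. \<forall>a<q. \<forall>b<q. X $$ (x*q+a, x*q+b) = (if a = b then X $$ (x*q, x*q) else 0)"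
    using T_prop[OF T] unfolding X_def .
  define z where "z = X $$ (x*q, x*q)"
  define g where "g = mat q q (\<lambda>(t,b). if t < len then E $$ (a+t, x*q+b) else 0)"
  have gc: "g \<in> carrier_mat q q" by (simp add: g_def)
  have agc: "adj g \<in> carrier_mat q q" by (rule adj_carrier[OF gc])
  have gg: "adj g * g = z \<cdot>\<^sub>m 1\<^sub>m q"
  proof (rule eq_matI)
    fix b b' assume "b < dim_row (z \<cdot>\<^sub>m 1\<^sub>m q)" "b' < dim_col (z \<cdot>\<^sub>m 1\<^sub>m q)"
    hence bb: "b < q" "b' < q" by simp_all
    have "(adj g * g) $$ (b,b') = (\<Sum>t\<in>{0..<q}. adj g $$ (b,t) * g $$ (t,b'))"
      using gc agc bb by (simp add: scalar_prod_def)
    also have "\<dots> = (\<Sum>t\<in>{0..<q}. if t < len then cnj (E $$ (a+t, x*q+b)) * E $$ (a+t, x*q+b') else 0)"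
      by (rule sum.cong) (use bb gc in \<open>auto simp: g_def adj_index\<close>)
    also have "\<dots> = (\<Sum>t\<in>{0..<len}. cnj (E $$ (a+t, x*q+b)) * E $$ (a+t, x*q+b'))"
      by (rule sum_prefix) (use lq in simp)
    also have "\<dots> = X $$ (x*q+b, x*q+b')"
      unfolding X_def by (rule X_entry[OF E aN, symmetric]) (use idx_lt x bb in auto)
    also have "\<dots> = (if b = b' then z else 0)" using TP x bb unfolding z_def by blast
    also have "\<dots> = (z \<cdot>\<^sub>m 1\<^sub>m q) $$ (b,b')" using bb by simp
    finally show "(adj g * g) $$ (b,b') = (z \<cdot>\<^sub>m 1\<^sub>m q) $$ (b,b')" .
  qed (use gc agc in simp_all)
  have dg: "det g = 0"
  proof -
    have "g = mat\<^sub>r q q (\<lambda>i. if i = q-1 then 0\<^sub>v q else row g i)"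
    proof (rule eq_matI)
      fix i j assume "i < dim_row (mat\<^sub>r q q (\<lambda>i. if i = q-1 then 0\<^sub>v q else row g i))"
        "j < dim_col (mat\<^sub>r q q (\<lambda>i. if i = q-1 then 0\<^sub>v q else row g i))"
      hence ij: "i < q" "j < q" by simp_all
      show "g $$ (i,j) = mat\<^sub>r q q (\<lambda>i. if i = q-1 then 0\<^sub>v q else row g i) $$ (i,j)"
      proof (cases "i = q - 1")
        case True
        hence "\<not> i < len" using lq by simp
        thus ?thesis using True ij by (simp add: g_def)
      next
        case False
        thus ?thesis using ij gc by simp
      qed
    qed (use gc in simp_all)
    also have "det \<dots> = 0"
      by (rule det_row_0) (use q0 gc in auto)
    finally show ?thesis .
  qed
  have "det (adj g * g) = det (adj g) * det g" by (rule det_mult[OF agc gc])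
  hence "det (z \<cdot>\<^sub>m 1\<^sub>m q) = 0" using gg dg by simp
  hence "z ^ q = 0" by simp
  hence z0: "z = 0" by simp
  have "X $$ (c,c) = 0" using TP x al z0 unfolding cx z_def by simp
  hence sum0: "(\<Sum>t\<in>{0..<len}. cnj (E $$ (a+t,c)) * E $$ (a+t,c)) = 0"
    using X_entry[OF E aN c c] unfolding X_def by simp
  have "(\<Sum>t\<in>{0..<len}. cnj (E $$ (a+t,c)) * E $$ (a+t,c)) = of_real (\<Sum>t\<in>{0..<len}. (cmod (E $$ (a+t,c)))^2)"
  proof -
    have "(\<Sum>t\<in>{0..<len}. cnj (E $$ (a+t,c)) * E $$ (a+t,c)) = (\<Sum>t\<in>{0..<len}. of_real ((cmod (E $$ (a+t,c)))^2))"
      by (rule sum.cong) (rule refl, subst complex_norm_square, rule mult.commute)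
    also have "\<dots> = of_real (\<Sum>t\<in>{0..<len}. (cmod (E $$ (a+t,c)))^2)"
      by (simp only: of_real_sum)
    finally show ?thesis .
  qed
  hence "complex_of_real (\<Sum>t\<in>{0..<len}. (cmod (E $$ (a+t,c)))^2) = 0" using sum0 by metis
  hence "(\<Sum>t\<in>{0..<len}. (cmod (E $$ (a+t,c)))^2) = 0" by (simp only: of_real_eq_0_iff)
  hence "\<forall>t\<in>{0..<len}. (cmod (E $$ (a+t,c)))^2 = 0"
    by (subst (asm) sum_nonneg_eq_0_iff) auto
  moreover have "k - a \<in> {0..<len}" using k by auto
  ultimately have "(cmod (E $$ (a+(k-a),c)))^2 = 0" by blast
  thus ?thesis using k by simp
qed



definition restr :: "nat \<Rightarrow> nat \<Rightarrow> complex mat \<Rightarrow> complex mat" where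
  "restr n1 n2 E = mat n2 (dim_col E) (\<lambda>(i,j). E $$ (i+n1, j))"

lemma sum_shift_zero: "(\<And>s. s < n1 \<Longrightarrow> f s = 0) \<Longrightarrow>
  (\<Sum>s\<in>{0..<n1+n2}. f s) = (\<Sum>t\<in>{0..<n2}. f (t+(n1::nat)))"
proof -
  assume z: "\<And>s. s < n1 \<Longrightarrow> f s = 0"
  have "{0..<n1+n2} = {0..<n1} \<union> {n1..<n1+n2}" by auto
  hence "(\<Sum>s\<in>{0..<n1+n2}. f s) = (\<Sum>s\<in>{0..<n1}. f s) + (\<Sum>s\<in>{n1..<n1+n2}. f s)"
    by (simp add: sum.union_disjoint)
  also have "(\<Sum>s\<in>{0..<n1}. f s) = 0" using z by simp
  also have "(\<Sum>s\<in>{n1..<n1+n2}. f s) = (\<Sum>t\<in>{0..<n2}. f (t+n1))"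
    using sum.shift_bounds_nat_ivl[of f 0 n1 n2] by (simp add: add.commute)
  finally show ?thesis by simp
qed

lemma restr_carrier: "E \<in> carrier_mat N K \<Longrightarrow> restr n1 n2 E \<in> carrier_mat n2 K"
  by (simp add: restr_def)

lemma restr_gram: assumes E: "E \<in> carrier_mat (n1+n2) K" and z: "\<And>k c. k < n1 \<Longrightarrow> c < K \<Longrightarrow> E $$ (k,c) = 0"
  shows "adj (restr n1 n2 E) * restr n1 n2 E = adj E * E"
proof (rule eq_matI)
  have R: "restr n1 n2 E \<in> carrier_mat n2 K" by (rule restr_carrier[OF E])
  fix i j assume "i < dim_row (adj E * E)" "j < dim_col (adj E * E)"
  hence ij: "i < K" "j < K" using E by (simp_all add: adj_def)
  have "(adj (restr n1 n2 E) * restr n1 n2 E) $$ (i,j) = (\<Sum>t\<in>{0..<n2}. cnj (E $$ (t+n1,i)) * E $$ (t+n1,j))"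
    using R E ij by (simp add: scalar_prod_def adj_def restr_def)
  also have "\<dots> = (\<Sum>s\<in>{0..<n1+n2}. cnj (E $$ (s,i)) * E $$ (s,j))"
    by (rule sum_shift_zero[symmetric]) (simp add: z ij)
  also have "\<dots> = (adj E * E) $$ (i,j)"
    using E ij by (simp add: scalar_prod_def adj_def)
  finally show "(adj (restr n1 n2 E) * restr n1 n2 E) $$ (i,j) = (adj E * E) $$ (i,j)" .
qed (use E in \<open>simp_all add: adj_def restr_def\<close>)

lemma shift_mult: assumes Ej: "Ej \<in> carrier_mat (n1+n2) K" and A: "A \<in> carrier_mat n2 n2"
  and s: "s < n1+n2" and j: "j < K"
  shows "(shiftm n1 A * Ej) $$ (s,j) = (if n1 \<le> s then (A * restr n1 n2 Ej) $$ (s-n1, j) else 0)"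
proof -
  have Sc: "shiftm n1 A \<in> carrier_mat (n1+n2) (n1+n2)" using A by (simp add: shiftm_def)
  have "(shiftm n1 A * Ej) $$ (s,j) = (\<Sum>l\<in>{0..<n1+n2}. shiftm n1 A $$ (s,l) * Ej $$ (l,j))"
    using Sc Ej s j by (simp add: scalar_prod_def)
  also have "\<dots> = (\<Sum>t\<in>{0..<n2}. shiftm n1 A $$ (s,t+n1) * Ej $$ (t+n1,j))"
    by (rule sum_shift_zero) (use A s in \<open>simp add: shiftm_def\<close>)
  also have "\<dots> = (if n1 \<le> s then (A * restr n1 n2 Ej) $$ (s-n1, j) else 0)"
  proof (cases "n1 \<le> s")
    case True
    have sn: "s - n1 < n2" using s True by linarith
    have "(\<Sum>t\<in>{0..<n2}. shiftm n1 A $$ (s,t+n1) * Ej $$ (t+n1,j)) = (\<Sum>t\<in>{0..<n2}. A $$ (s-n1,t) * Ej $$ (t+n1,j))"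
      by (rule sum.cong) (use A s True in \<open>simp_all add: shiftm_def\<close>)
    also have "\<dots> = (A * restr n1 n2 Ej) $$ (s-n1, j)"
      using A Ej sn j by (simp add: scalar_prod_def restr_def)
    finally show ?thesis using True by simp
  next
    case False
    thus ?thesis using A s by (simp add: shiftm_def)
  qed
  finally show ?thesis .
qed

lemma restr_sandwich: assumes Ei: "Ei \<in> carrier_mat (n1+n2) K" and Ej: "Ej \<in> carrier_mat (n1+n2) K"
  and A: "A \<in> carrier_mat n2 n2"
  shows "adj (restr n1 n2 Ei) * A * restr n1 n2 Ej = adj Ei * shiftm n1 A * Ej"
proof -
  have Ri: "restr n1 n2 Ei \<in> carrier_mat n2 K" by (rule restr_carrier[OF Ei])
  have Rj: "restr n1 n2 Ej \<in> carrier_mat n2 K" by (rule restr_carrier[OF Ej])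
  have aRi: "adj (restr n1 n2 Ei) \<in> carrier_mat K n2" by (rule adj_carrier[OF Ri])
  have aEi: "adj Ei \<in> carrier_mat K (n1+n2)" by (rule adj_carrier[OF Ei])
  have Sc: "shiftm n1 A \<in> carrier_mat (n1+n2) (n1+n2)" using A by (simp add: shiftm_def)
  have e1: "adj (restr n1 n2 Ei) * A * restr n1 n2 Ej = adj (restr n1 n2 Ei) * (A * restr n1 n2 Ej)"
    by (rule assoc_mult_mat[OF aRi A Rj])
  have e2: "adj Ei * shiftm n1 A * Ej = adj Ei * (shiftm n1 A * Ej)"
    by (rule assoc_mult_mat[OF aEi Sc Ej])
  have ARj: "A * restr n1 n2 Ej \<in> carrier_mat n2 K" using A Rj by simp
  have SEj: "shiftm n1 A * Ej \<in> carrier_mat (n1+n2) K" using Sc Ej by simp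
  show ?thesis unfolding e1 e2
  proof (rule eq_matI)
    fix i j assume "i < dim_row (adj Ei * (shiftm n1 A * Ej))" "j < dim_col (adj Ei * (shiftm n1 A * Ej))"
    hence ij: "i < K" "j < K" using aEi SEj Ej by simp_all
    have "(adj Ei * (shiftm n1 A * Ej)) $$ (i,j) = (\<Sum>s\<in>{0..<n1+n2}. adj Ei $$ (i,s) * (shiftm n1 A * Ej) $$ (s,j))"
      using aEi SEj Ej Sc ij by (simp add: scalar_prod_def)
    also have "\<dots> = (\<Sum>t\<in>{0..<n2}. adj Ei $$ (i,t+n1) * (shiftm n1 A * Ej) $$ (t+n1,j))"
      by (rule sum_shift_zero) (use Ej A ij in \<open>simp add: shift_mult\<close>)
    also have "\<dots> = (\<Sum>t\<in>{0..<n2}. adj (restr n1 n2 Ei) $$ (i,t) * (A * restr n1 n2 Ej) $$ (t,j))"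
      by (rule sum.cong) (use Ei Ej A ij Ri in \<open>simp_all add: shift_mult adj_index restr_def\<close>)
    also have "\<dots> = (adj (restr n1 n2 Ei) * (A * restr n1 n2 Ej)) $$ (i,j)"
      using aRi ARj Ri Rj A Ej ij by (simp add: scalar_prod_def)
    finally show "(adj (restr n1 n2 Ei) * (A * restr n1 n2 Ej)) $$ (i,j) = (adj Ei * (shiftm n1 A * Ej)) $$ (i,j)" by simp
  qed (use aRi ARj aEi SEj Rj Ej in simp_all)
qed



theorem lemma3p2:
  fixes hn :: nat and HE :: "nat \<Rightarrow> nat \<Rightarrow> bool"
    and Gn :: "nat \<Rightarrow> nat" and GE :: "nat \<Rightarrow> nat \<Rightarrow> nat \<Rightarrow> bool"
    and r q :: nat
  assumes "simple_graph hn HE"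
    and "\<And>d. 1 \<le> d \<Longrightarrow> d \<le> r \<Longrightarrow> simple_graph (Gn d) (GE d)"
    and "1 \<le> q" and "q \<le> r"
    and "cohom (hn * q) (nc_tensor hn (ghat hn HE) q (Cd q))
           (fst (nc_dsum (map (summand Gn GE) [1..<r+1])))
           (snd (nc_dsum (map (summand Gn GE) [1..<r+1])))"
  shows "cohom (hn * q) (nc_tensor hn (ghat hn HE) q (Cd q))
           (fst (nc_dsum (map (summand Gn GE) [q..<r+1])))
           (snd (nc_dsum (map (summand Gn GE) [q..<r+1])))"
proof -
  define T where "T = nc_tensor hn (ghat hn HE) q (Cd q)"
  define K where "K = hn * q"
  define L1 where "L1 = map (summand Gn GE) [1..<q]"
  define L2 where "L2 = map (summand Gn GE) [q..<r+1]"
  define n1 where "n1 = fst (nc_dsum L1)"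
  define n2 where "n2 = fst (nc_dsum L2)"
  have up: "[1..<r+1] = [1..<q] @ [q..<r+1]"
    using upt_add_eq_append[of 1 q "r+1-q"] assms(3,4) by simp
  have LL: "map (summand Gn GE) [1..<r+1] = L1 @ L2" unfolding up L1_def L2_def by simp
  have Nf: "fst (nc_dsum (L1 @ L2)) = n1 + n2" unfolding n1_def n2_def by (rule dsum_fst_append)
  obtain Es where Ec: "\<forall>E\<in>set Es. E \<in> carrier_mat (n1+n2) K"
    and Id: "msum K (map (\<lambda>E. adj E * E) Es) = 1\<^sub>m K"
    and Tc: "\<forall>Ei\<in>set Es. \<forall>Ej\<in>set Es. \<forall>A\<in>snd (nc_dsum (L1 @ L2)). adj Ei * A * Ej \<in> T"
    using assms(5) unfolding cohom_def LL Nf T_def K_def by blast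
  have zall: "\<forall>p\<in>set (L1@L2). 0\<^sub>m (fst p) (fst p) \<in> snd p"
  proof
    fix p assume "p \<in> set (L1@L2)"
    then obtain d where "p = summand Gn GE d" unfolding L1_def L2_def by auto
    thus "0\<^sub>m (fst p) (fst p) \<in> snd p" by (simp add: summand_zero)
  qed
  have z1: "\<forall>p\<in>set L1. 0\<^sub>m (fst p) (fst p) \<in> snd p" using zall by simp
  have c2: "\<forall>p\<in>set L2. snd p \<subseteq> carrier_mat (fst p) (fst p)"
  proof
    fix p assume "p \<in> set L2"
    then obtain d where "p = summand Gn GE d" unfolding L2_def by auto
    thus "snd p \<subseteq> carrier_mat (fst p) (fst p)" by (simp add: summand_carrier)
  qed
  have h1: "\<forall>p\<in>set L1. \<forall>k<fst p. \<exists>a len. a \<le> k \<and> k < a+len \<and> a+len \<le> fst p \<and> len < q \<and> indm (fst p) a len \<in> snd p"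
  proof
    fix p assume "p \<in> set L1"
    then obtain d where d: "p = summand Gn GE d" "1 \<le> d" "d < q" unfolding L1_def by auto
    show "\<forall>k<fst p. \<exists>a len. a \<le> k \<and> k < a+len \<and> a+len \<le> fst p \<and> len < q \<and> indm (fst p) a len \<in> snd p"
      unfolding d(1) by (rule summand_ind) (use d in simp_all)
  qed
  have zero_rows: "E $$ (k,c) = 0" if E: "E \<in> set Es" and k: "k < n1" and c: "c < K" for E k c
  proof -
    obtain a len where al: "a \<le> k" "k < a+len" "a+len \<le> n1+n2" "len < q"
      "indm (n1+n2) a len \<in> snd (nc_dsum (L1@L2))"
      using dsum_ind[of k L1 L2 q, OF _ zall h1] k unfolding n1_def Nf[unfolded n1_def] by blast
    have EC: "E \<in> carrier_mat (n1+n2) (hn*q)" using Ec E unfolding K_def by blast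
    have "adj E * indm (n1+n2) a len * E \<in> T" using Tc E al(5) by blast
    thus ?thesis
      by (intro rows_zero[OF EC al(3) al(4) _ al(1) al(2)]) (use c in \<open>simp_all add: T_def K_def\<close>)
  qed
  define Es' where "Es' = map (restr n1 n2) Es"
  show ?thesis
    unfolding cohom_def T_def[symmetric] K_def[symmetric] L2_def[symmetric] n2_def[symmetric]
  proof (intro exI[of _ Es'] conjI ballI)
    fix E' assume "E' \<in> set Es'"
    then obtain E where "E \<in> set Es" "E' = restr n1 n2 E" unfolding Es'_def by auto
    thus "E' \<in> carrier_mat n2 K" using Ec restr_carrier by blast
  next
    have "map (\<lambda>E. adj E * E) Es' = map (\<lambda>E. adj E * E) Es"
      unfolding Es'_def map_map o_def
    proof (rule map_cong[OF refl])
      fix E assume E: "E \<in> set Es"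
      show "adj (restr n1 n2 E) * restr n1 n2 E = adj E * E"
        by (rule restr_gram) (use Ec E zero_rows in auto)
    qed
    thus "msum K (map (\<lambda>E. adj E * E) Es') = 1\<^sub>m K" using Id by simp
  next
    fix Ei' Ej' A assume h: "Ei' \<in> set Es'" "Ej' \<in> set Es'" "A \<in> snd (nc_dsum L2)"
    obtain Ei where Ei: "Ei \<in> set Es" "Ei' = restr n1 n2 Ei" using h(1) unfolding Es'_def by auto
    obtain Ej where Ej: "Ej \<in> set Es" "Ej' = restr n1 n2 Ej" using h(2) unfolding Es'_def by auto
    have Ac: "A \<in> carrier_mat n2 n2" using dsum_carrier[OF c2] h(3) unfolding n2_def by blast
    have "shiftm n1 A \<in> snd (nc_dsum (L1 @ L2))"
      unfolding n1_def by (rule dsum_shift[OF z1 h(3)]) (use Ac in \<open>simp add: n2_def\<close>)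
    hence "adj Ei * shiftm n1 A * Ej \<in> T" using Tc Ei(1) Ej(1) by blast
    moreover have "adj Ei' * A * Ej' = adj Ei * shiftm n1 A * Ej"
      unfolding Ei(2) Ej(2) by (rule restr_sandwich) (use Ec Ei Ej Ac in auto)
    ultimately show "adj Ei' * A * Ej' \<in> T" by simp
  qed
qed


end
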